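(* Let $A$ be a $d$-dimensional double permutation of order $n$, and suppose there is an integer $k$ with $2\le k\le d-1$ such that the support of every $k$-dimensional plane of $A$ and the support of every $(k+1)$-dimensional plane of $A$ is a connected bitrade. Then the support of $A$ is a connected bitrade.
   Context: A $d$-dimensional matrix of order $n$ is an array $A=(a_\alpha)_{\alpha\in I_n^d}$, $I_n^d=\{0,\dots,n-1\}^d$. A $k$-dimensional plane is obtained by fixing the values of $d-k$ coordinate positions and letting the other $k$ coordinates vary over $\{0,\dots,n-1\}$; a line is a $1$-dimensional plane. A double permutation is a polystochastic matrix (nonnegative, each line sums to $1$) all of whose entries lie in $\{0,1/2\}$. The support of a matrix (or plane) is the set of indices with nonzero entries; the support of a $k$-dimensional plane is regarded as a subset of a $k$-dimensional index set. A set $U$ of indices is a unitrade if every line contains either $0$ or $2$ elements of $U$. Consider the graph on $U$ in which two elements are adjacent iff they lie on a common line; $U$ is a bitrade if this graph is bipartite (equivalently there is $\sigma:U\to\{\pm1\}$ with $\sigma(\alpha)\ne\sigma(\beta)$ whenever $\alpha,\beta\in U$ lie on a common line), and $U$ is connected if this graph is connected. *)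

theory Defs
  imports Complex_Main
begin

definition idx :: "nat \<Rightarrow> nat \<Rightarrow> nat list set" where
  "idx d n = {x. length x = d \<and> (\<forall>j<d. x ! j < n)}"

definition line :: "nat \<Rightarrow> nat \<Rightarrow> nat \<Rightarrow> nat list \<Rightarrow> nat list set" where
  "line d n i x = {y \<in> idx d n. \<forall>j<d. j \<noteq> i \<longrightarrow> y ! j = x ! j}"

definition plane :: "nat \<Rightarrow> nat \<Rightarrow> nat set \<Rightarrow> nat list \<Rightarrow> nat list set" where
  "plane d n K x = {y \<in> idx d n. \<forall>j<d. j \<notin> K \<longrightarrow> y ! j = x ! j}"

definition polystochastic :: "nat \<Rightarrow> nat \<Rightarrow> (nat list \<Rightarrow> real) \<Rightarrow> bool" where
  "polystochastic d n A \<longleftrightarrow>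
     (\<forall>x\<in>idx d n. A x \<ge> 0) \<and>
     (\<forall>i<d. \<forall>x\<in>idx d n. (\<Sum>y\<in>line d n i x. A y) = 1)"

definition double_permutation :: "nat \<Rightarrow> nat \<Rightarrow> (nat list \<Rightarrow> real) \<Rightarrow> bool" where
  "double_permutation d n A \<longleftrightarrow>
     polystochastic d n A \<and> (\<forall>x\<in>idx d n. A x = 0 \<or> A x = 1/2)"

definition support :: "nat \<Rightarrow> nat \<Rightarrow> (nat list \<Rightarrow> real) \<Rightarrow> nat list set" where
  "support d n A = {x \<in> idx d n. A x \<noteq> 0}"

definition adjacent :: "nat \<Rightarrow> nat \<Rightarrow> nat list \<Rightarrow> nat list \<Rightarrow> bool" where
  "adjacent d n a b \<longleftrightarrow> a \<noteq> b \<and> (\<exists>i<d. b \<in> line d n i a)"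

definition unitrade_in :: "nat \<Rightarrow> nat \<Rightarrow> nat set \<Rightarrow> nat list set \<Rightarrow> nat list set \<Rightarrow> bool" where
  "unitrade_in d n K P U \<longleftrightarrow>
     (\<forall>x\<in>P. \<forall>i\<in>K. card (U \<inter> line d n i x) = 0 \<or> card (U \<inter> line d n i x) = 2)"

definition bitrade_in :: "nat \<Rightarrow> nat \<Rightarrow> nat set \<Rightarrow> nat list set \<Rightarrow> nat list set \<Rightarrow> bool" where
  "bitrade_in d n K P U \<longleftrightarrow> unitrade_in d n K P U \<and>
     (\<exists>\<sigma> :: nat list \<Rightarrow> bool. \<forall>a\<in>U. \<forall>b\<in>U. adjacent d n a b \<longrightarrow> \<sigma> a \<noteq> \<sigma> b)"

definition connected_set :: "nat \<Rightarrow> nat \<Rightarrow> nat list set \<Rightarrow> bool" where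
  "connected_set d n U \<longleftrightarrow>
     (\<forall>a\<in>U. \<forall>b\<in>U. (a, b) \<in> {(x, y). x \<in> U \<and> y \<in> U \<and> adjacent d n x y}\<^sup>*)"

definition connected_bitrade_in :: "nat \<Rightarrow> nat \<Rightarrow> nat set \<Rightarrow> nat list set \<Rightarrow> nat list set \<Rightarrow> bool" where
  "connected_bitrade_in d n K P U \<longleftrightarrow> bitrade_in d n K P U \<and> connected_set d n U"

end

theory Submission
  imports Defs
begin

definition proper :: "nat \<Rightarrow> nat \<Rightarrow> nat list set \<Rightarrow> (nat list \<Rightarrow> bool) \<Rightarrow> bool" where
  "proper d n U s \<longleftrightarrow> (\<forall>a\<in>U. \<forall>b\<in>U. adjacent d n a b \<longrightarrow> s a \<noteq> s b)"

lemma proper_mono: "proper d n U s \<Longrightarrow> V \<subseteq> U \<Longrightarrow> proper d n V s"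
  unfolding proper_def by blast

lemma proper_unique:
  assumes "connected_set d n U" "proper d n U s1" "proper d n U s2" "u \<in> U" "w \<in> U"
  shows "(s1 u \<noteq> s2 u) = (s1 w \<noteq> s2 w)"
proof -
  have "(u, w) \<in> {(x, y). x \<in> U \<and> y \<in> U \<and> adjacent d n x y}\<^sup>*"
    using assms(1,4,5) unfolding connected_set_def by blast
  then show ?thesis
  proof (induction rule: rtrancl_induct)
    case base then show ?case by simp
  next
    case (step y z)
    then have "s1 y \<noteq> s1 z" "s2 y \<noteq> s2 z" using assms(2,3) unfolding proper_def by auto
    with step.IH show ?case by auto
  qed
qed

lemma rel_mono: "U \<subseteq> V \<Longrightarrow> {(x,y). x\<in>U \<and> y\<in>U \<and> adjacent d n x y}\<^sup>* \<subseteq> {(x,y). x\<in>V \<and> y\<in>V \<and> adjacent d n x y}\<^sup>*"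
  by (rule rtrancl_mono) auto

lemma finite_idx: "finite (idx d n)"
proof -
  have "idx d n \<subseteq> {xs. set xs \<subseteq> {..<n} \<and> length xs = d}"
    unfolding idx_def by (auto simp: in_set_conv_nth)
  moreover have "finite {xs. set xs \<subseteq> {..<n} \<and> length xs = d}"
    by (rule finite_lists_length_eq) simp
  ultimately show ?thesis by (rule finite_subset)
qed

lemma plane_sub: "K' \<subseteq> K \<Longrightarrow> y \<in> plane d n K x \<Longrightarrow> plane d n K' y \<subseteq> plane d n K x"
  unfolding plane_def by auto

lemma line_sub_plane: "i \<in> K \<Longrightarrow> line d n i z \<subseteq> plane d n K z"
  unfolding plane_def line_def by auto

lemma plane_self: "x \<in> idx d n \<Longrightarrow> x \<in> plane d n K x"
  unfolding plane_def by auto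

lemma plane_inter: "y \<in> plane d n K1 x1 \<Longrightarrow> y \<in> plane d n K2 x2 \<Longrightarrow>
   plane d n K1 x1 \<inter> plane d n K2 x2 = plane d n (K1 \<inter> K2) y"
  unfolding plane_def by auto

lemma ex_out: "finite F \<Longrightarrow> card F < card K \<Longrightarrow> \<exists>x\<in>K. x \<notin> F"
  by (meson card_mono not_le subsetI)

locale dp =
  fixes d n :: nat and A :: "nat list \<Rightarrow> real"
  assumes DP: "double_permutation d n A"
begin

abbreviation "S \<equiv> support d n A"

lemma line_card: assumes "x \<in> idx d n" "i < d" shows "card (S \<inter> line d n i x) = 2"
proof -
  let ?L = "line d n i x"
  have Lidx: "?L \<subseteq> idx d n" unfolding line_def by auto
  have fin: "finite ?L" using finite_subset[OF Lidx finite_idx] .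
  have sum1: "(\<Sum>y\<in>?L. A y) = 1" using DP assms unfolding double_permutation_def polystochastic_def by blast
  have "(\<Sum>y\<in>?L. A y) = (\<Sum>y\<in>S \<inter> ?L. A y)"
    by (rule sum.mono_neutral_right) (use fin Lidx in \<open>auto simp: support_def\<close>)
  also have "\<dots> = (\<Sum>y\<in>S \<inter> ?L. 1/2)"
    apply (rule sum.cong) using DP unfolding double_permutation_def support_def by auto
  also have "\<dots> = real (card (S \<inter> ?L)) / 2" by simp
  finally have "real (card (S \<inter> ?L)) = 2" using sum1 by simp
  then show ?thesis by linarith
qed

lemma line_ne: assumes "x \<in> idx d n" "i < d" obtains y where "y \<in> S" "y \<in> line d n i x"
  using line_card[OF assms] by (metis Int_iff card.empty ex_in_conv zero_neq_numeral)

lemma unitrade: assumes "K \<subseteq> {..<d}" shows "unitrade_in d n K (plane d n K x) (S \<inter> plane d n K x)"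
  unfolding unitrade_in_def
proof (intro ballI)
  fix x' i assume x': "x' \<in> plane d n K x" and i: "i \<in> K"
  have "line d n i x' \<subseteq> plane d n K x" using line_sub_plane[OF i] plane_sub[OF order_refl x'] by blast
  hence "S \<inter> plane d n K x \<inter> line d n i x' = S \<inter> line d n i x'" by blast
  moreover have "x' \<in> idx d n" using x' unfolding plane_def by auto
  ultimately show "card (S \<inter> plane d n K x \<inter> line d n i x') = 0 \<or> card (S \<inter> plane d n K x \<inter> line d n i x') = 2"
    using line_card i assms by auto
qed

lemma pick4:
  assumes "finite K" "card K \<ge> 4"
  obtains i j l g where "i \<in> K" "j \<in> K" "l \<in> K" "g \<in> K" "i \<noteq> j" "i \<noteq> l" "i \<noteq> g"
    "j \<noteq> l" "j \<noteq> g" "l \<noteq> g"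
proof -
  obtain i where i: "i \<in> K" using ex_out[of "{}" K] assms by auto
  obtain j where j: "j \<in> K" "j \<notin> {i}" using ex_out[of "{i}" K] assms by auto
  obtain l where l: "l \<in> K" "l \<notin> {i,j}" using ex_out[of "{i,j}" K] assms j by auto
  obtain g where g: "g \<in> K" "g \<notin> {i,j,l}" using ex_out[of "{i,j,l}" K] assms j l by auto
  show ?thesis using that i j l g by auto
qed

lemma conn_step:
  assumes CM: "\<And>K' y. K' \<subseteq> {..<d} \<Longrightarrow> card K' = m \<Longrightarrow> y \<in> idx d n \<Longrightarrow> connected_set d n (S \<inter> plane d n K' y)"
  and K: "K \<subseteq> {..<d}" "card K = Suc m" "m \<ge> 3" and x: "x \<in> idx d n"
  shows "connected_set d n (S \<inter> plane d n K x)"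
  unfolding connected_set_def
proof (intro ballI)
  fix a b assume a: "a \<in> S \<inter> plane d n K x" and b: "b \<in> S \<inter> plane d n K x"
  have fK: "finite K" using K finite_subset by blast
  obtain i j l g where ijl: "i \<in> K" "j \<in> K" "l \<in> K" "i \<noteq> j" "i \<noteq> l" "j \<noteq> l"
    using pick4[OF fK] K by (metis Suc_le_mono numeral_3_eq_3 Suc_numeral semiring_norm(2) semiring_norm(8))
  have ai: "a \<in> idx d n" "b \<in> idx d n" using a b unfolding plane_def by auto
  have dK: "i < d" "j < d" "l < d" using K ijl by auto
  define z where "z = a[i := b!i]"
  have z: "z \<in> idx d n" using ai dK unfolding z_def idx_def by (auto simp: nth_list_update)
  obtain c where c: "c \<in> S" "c \<in> line d n l z" using line_ne[OF z dK(3)] by blast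
  have c1: "c \<in> plane d n (K-{j}) a"
    using c ai a b ijl dK unfolding line_def plane_def z_def idx_def by (auto simp: nth_list_update)
  have c2: "c \<in> plane d n (K-{i}) b"
    using c ai a b ijl dK unfolding line_def plane_def z_def idx_def
    by (auto simp: nth_list_update)
  have cardj: "card (K-{j}) = m" "card (K-{i}) = m" using K ijl fK by auto
  have sub1: "S \<inter> plane d n (K-{j}) a \<subseteq> S \<inter> plane d n K x" using plane_sub[of "K-{j}" K a d n x] a by auto
  have sub2: "S \<inter> plane d n (K-{i}) b \<subseteq> S \<inter> plane d n K x" using plane_sub[of "K-{i}" K b d n x] b by auto
  have "(a, c) \<in> {(x, y). x \<in> S \<inter> plane d n (K-{j}) a \<and> y \<in> S \<inter> plane d n (K-{j}) a \<and> adjacent d n x y}\<^sup>*"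
    using CM[of "K-{j}" a] K cardj ai c c1 a plane_self[OF ai(1)] unfolding connected_set_def by blast
  hence 1: "(a, c) \<in> {(u, v). u \<in> S \<inter> plane d n K x \<and> v \<in> S \<inter> plane d n K x \<and> adjacent d n u v}\<^sup>*"
    using rel_mono[OF sub1] by blast
  have "(c, b) \<in> {(x, y). x \<in> S \<inter> plane d n (K-{i}) b \<and> y \<in> S \<inter> plane d n (K-{i}) b \<and> adjacent d n x y}\<^sup>*"
    using CM[of "K-{i}" b] K cardj ai c c2 b plane_self[OF ai(2)] unfolding connected_set_def by blast
  hence 2: "(c, b) \<in> {(u, v). u \<in> S \<inter> plane d n K x \<and> v \<in> S \<inter> plane d n K x \<and> adjacent d n u v}\<^sup>*"
    using rel_mono[OF sub2] by blast
  show "(a, b) \<in> {(xa, y). xa \<in> S \<inter> plane d n K x \<and> y \<in> S \<inter> plane d n K x \<and> adjacent d n xa y}\<^sup>*"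
    using rtrancl_trans[OF 1 2] .
qed

lemma bip_step:
  assumes CM1: "\<And>K' y. K' \<subseteq> {..<d} \<Longrightarrow> card K' = m - 1 \<Longrightarrow> y \<in> idx d n \<Longrightarrow> connected_set d n (S \<inter> plane d n K' y)"
  and CM: "\<And>K' y. K' \<subseteq> {..<d} \<Longrightarrow> card K' = m \<Longrightarrow> y \<in> idx d n \<Longrightarrow> \<exists>s. proper d n (S \<inter> plane d n K' y) s"
  and K: "K \<subseteq> {..<d}" "card K = Suc m" "m \<ge> 3" and x: "x \<in> idx d n"
  shows "\<exists>s. proper d n (S \<inter> plane d n K x) s"
proof (cases "S \<inter> plane d n K x = {}")
  case True then show ?thesis unfolding proper_def by auto
next
  case False
  then obtain p where p: "p \<in> S" "p \<in> plane d n K x" by blast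
  have pidx: "p \<in> idx d n" using p unfolding plane_def by auto
  have fK: "finite K" using K finite_subset by blast
  obtain i j l g where ijl: "i \<in> K" "j \<in> K" "l \<in> K" "g \<in> K" "i \<noteq> j" "i \<noteq> l" "i \<noteq> g"
    "j \<noteq> l" "j \<noteq> g" "l \<noteq> g"
  proof -
    have "card K \<ge> 4" using K(2,3) by simp
    then show ?thesis using pick4[OF fK] that by blast
  qed
  have dK: "i < d" "j < d" "l < d" "g < d" using K(1) ijl by auto
  have c1: "card (K - {i}) = m" "card (K - {j}) = m" "card (K - {l}) = m"
    using card_Diff_singleton[OF ijl(1)] card_Diff_singleton[OF ijl(2)] card_Diff_singleton[OF ijl(3)] K(2)
    by simp_all
  have c2: "card ((K - {i}) \<inter> (K - {l})) = m - 1" "card ((K - {j}) \<inter> (K - {i})) = m - 1"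
     "card ((K - {l}) \<inter> (K - {j})) = m - 1"
  proof -
    have e: "(K - {i}) \<inter> (K - {l}) = (K - {i}) - {l}" "(K - {j}) \<inter> (K - {i}) = (K - {j}) - {i}"
      "(K - {l}) \<inter> (K - {j}) = (K - {l}) - {j}" by auto
    show "card ((K - {i}) \<inter> (K - {l})) = m - 1" "card ((K - {j}) \<inter> (K - {i})) = m - 1"
     "card ((K - {l}) \<inter> (K - {j})) = m - 1"
      unfolding e using card_Diff_singleton[of l "K - {i}"] card_Diff_singleton[of i "K - {j}"]
        card_Diff_singleton[of j "K - {l}"] c1 ijl by auto
  qed
  have Ks: "K - {i} \<subseteq> {..<d}" "K - {j} \<subseteq> {..<d}" "K - {l} \<subseteq> {..<d}"
    "(K - {i}) \<inter> (K - {l}) \<subseteq> {..<d}" "(K - {j}) \<inter> (K - {i}) \<subseteq> {..<d}" "(K - {l}) \<inter> (K - {j}) \<subseteq> {..<d}"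
    using K by auto
  obtain \<rho> where \<rho>: "proper d n (S \<inter> plane d n (K - {l}) p) \<rho>" using CM[OF Ks(3) c1(3) pidx] by blast
  define col where "col y = (SOME s. proper d n (S \<inter> plane d n (K - {i}) y) s)" for y
  have colp: "proper d n (S \<inter> plane d n (K - {i}) y) (col y)" if "y \<in> idx d n" for y
    unfolding col_def using CM[OF Ks(1) c1(1) that] by (rule someI_ex)
  define Y where "Y t = x[i := t]" for t
  have Y: "Y t \<in> idx d n" if "t < n" for t using x that dK unfolding Y_def idx_def by (auto simp: nth_list_update)
  define r where "r t = (SOME q. q \<in> S \<inter> plane d n (K - {i}) (Y t) \<inter> plane d n (K - {l}) p)" for t
  have hr: "r t \<in> S \<inter> plane d n (K - {i}) (Y t) \<inter> plane d n (K - {l}) p" if t: "t < n" for t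
  proof -
    define z where "z = p[i := t]"
    have z: "z \<in> idx d n" using pidx dK t unfolding z_def idx_def by (auto simp: nth_list_update)
    obtain q where q: "q \<in> S" "q \<in> line d n j z" using line_ne[OF z dK(2)] by blast
    have "q \<in> S \<inter> plane d n (K - {i}) (Y t) \<inter> plane d n (K - {l}) p"
      using q p x pidx ijl dK unfolding line_def plane_def z_def Y_def idx_def by (auto simp: nth_list_update)
    then show ?thesis unfolding r_def by (rule someI)
  qed
  define \<sigma> where "\<sigma> u = (col (Y (u!i)) u \<noteq> (col (Y (u!i)) (r (u!i)) \<noteq> \<rho> (r (u!i))))" for u
  have Pidx: "plane d n K' y \<subseteq> idx d n" for K' y unfolding plane_def by auto
  have ui: "u ! i < n" if "u \<in> plane d n K' y" for u K' y using that dK unfolding plane_def idx_def by auto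
  have uY: "u \<in> plane d n (K - {i}) (Y (u!i))" if "u \<in> plane d n K x" for u
    using that x dK unfolding plane_def Y_def idx_def by (auto simp: nth_list_update)
  have subK: "plane d n (K - {h}) y \<subseteq> plane d n K x" if "y \<in> plane d n K x" for h y
    using plane_sub[OF _ that] by blast
  have pV: "plane d n (K - {l}) p \<subseteq> plane d n K x" using subK[OF p(2)] .
  have sV: "\<sigma> q = \<rho> q" if q: "q \<in> S \<inter> plane d n (K - {l}) p" for q
  proof -
    let ?t = "q ! i"
    have t: "?t < n" using q ui by blast
    have qY: "q \<in> plane d n (K - {i}) (Y ?t)" using uY q pV by blast
    have eq: "plane d n (K - {i}) (Y ?t) \<inter> plane d n (K - {l}) p = plane d n ((K - {i}) \<inter> (K - {l})) q"
      using plane_inter[OF qY] q by blast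
    have qidx: "q \<in> idx d n" using q Pidx by blast
    have conn: "connected_set d n (S \<inter> plane d n ((K - {i}) \<inter> (K - {l})) q)"
      using CM1[OF Ks(4) c2(1) qidx] .
    have P1: "proper d n (S \<inter> plane d n ((K - {i}) \<inter> (K - {l})) q) (col (Y ?t))"
      using proper_mono[OF colp[OF Y[OF t]]] eq by blast
    have P2: "proper d n (S \<inter> plane d n ((K - {i}) \<inter> (K - {l})) q) \<rho>"
      using proper_mono[OF \<rho>] eq by blast
    have "(col (Y ?t) q \<noteq> \<rho> q) = (col (Y ?t) (r ?t) \<noteq> \<rho> (r ?t))"
      using proper_unique[OF conn P1 P2] hr[OF t] q qY eq by blast
    then show ?thesis unfolding \<sigma>_def by auto
  qed
  show ?thesis
  proof (intro exI)
    show "proper d n (S \<inter> plane d n K x) \<sigma>"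
      unfolding proper_def
    proof (intro ballI impI)
      fix a b assume a: "a \<in> S \<inter> plane d n K x" and b: "b \<in> S \<inter> plane d n K x" and adj: "adjacent d n a b"
      obtain h where h: "h < d" "b \<in> line d n h a" "a \<noteq> b" using adj unfolding adjacent_def by blast
      have ai: "a \<in> idx d n" "b \<in> idx d n" using a b Pidx by auto
      have hK: "h \<in> K"
      proof (rule ccontr)
        assume "h \<notin> K"
        then have "\<forall>j<d. a ! j = b ! j" using a b h unfolding plane_def line_def by auto
        then have "a = b" using ai unfolding idx_def by (auto intro: nth_equalityI)
        then show False using h by simp
      qed
      show "\<sigma> a \<noteq> \<sigma> b"
      proof (cases "h = i")
        case False
        have bi: "b ! i = a ! i" using h False dK unfolding line_def by auto
        have "a \<in> S \<inter> plane d n (K - {i}) (Y (a!i))" "b \<in> S \<inter> plane d n (K - {i}) (Y (a!i))"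
          using uY[of a] uY[of b] a b bi by auto
        then have "col (Y (a!i)) a \<noteq> col (Y (a!i)) b"
          using colp[OF Y[OF ui]] a adj unfolding proper_def by blast
        then show ?thesis unfolding \<sigma>_def using bi by auto
      next
        case True
        let ?W = "S \<inter> plane d n (K - {j}) a"
        obtain \<tau> where \<tau>: "proper d n ?W \<tau>" using CM[OF Ks(2) c1(2) ai(1)] by blast
        have aW: "a \<in> ?W" using a plane_self[OF ai(1)] by auto
        have bW: "b \<in> ?W" using b h True ijl ai a unfolding plane_def line_def by auto
        have Wsub: "plane d n (K - {j}) a \<subseteq> plane d n K x" using subK a by blast
        have exq: "\<exists>q. q \<in> S \<inter> plane d n (K - {l}) p \<and> q \<in> plane d n (K - {j}) a \<and> q ! i = u ! i"
          if u: "u \<in> ?W" for u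
        proof -
          define z where "z = p[i := u!i, j := a!j]"
          have un: "u ! i < n" "a ! j < n" using u ai dK ui unfolding idx_def by auto
          have z: "z \<in> idx d n" using pidx dK un unfolding z_def idx_def by (auto simp: nth_list_update)
          obtain q where q: "q \<in> S" "q \<in> line d n g z" using line_ne[OF z dK(4)] by blast
          have "q \<in> S \<inter> plane d n (K - {l}) p \<and> q \<in> plane d n (K - {j}) a \<and> q ! i = u ! i"
            using q p x pidx ijl dK a ai unfolding line_def plane_def z_def idx_def
            by (auto simp: nth_list_update)
          then show ?thesis by blast
        qed
        obtain q0 where q0: "q0 \<in> S \<inter> plane d n (K - {l}) p" "q0 \<in> plane d n (K - {j}) a"
          using exq[OF aW] by blast
        have q0idx: "q0 \<in> idx d n" using q0 Pidx by blast
        have eqVW: "plane d n (K - {l}) p \<inter> plane d n (K - {j}) a = plane d n ((K - {l}) \<inter> (K - {j})) q0"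
          using plane_inter q0 by blast
        have connVW: "connected_set d n (S \<inter> plane d n ((K - {l}) \<inter> (K - {j})) q0)"
          using CM1[OF Ks(6) c2(3) q0idx] .
        have key: "\<sigma> u = (\<tau> u \<noteq> (\<rho> q0 \<noteq> \<tau> q0))" if u: "u \<in> ?W" for u
        proof -
          obtain q where q: "q \<in> S \<inter> plane d n (K - {l}) p" "q \<in> plane d n (K - {j}) a" "q ! i = u ! i"
            using exq[OF u] by blast
          let ?t = "u ! i"
          have t: "?t < n" using u ui by blast
          have uK: "u \<in> plane d n K x" using u Wsub by blast
          have uY': "u \<in> plane d n (K - {i}) (Y ?t)" using uY[OF uK] .
          have qK: "q \<in> plane d n K x" using q pV by blast
          have qY': "q \<in> plane d n (K - {i}) (Y ?t)" using uY[OF qK] q(3) by simp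
          have uidx: "u \<in> idx d n" using u Pidx by blast
          have eq: "plane d n (K - {j}) a \<inter> plane d n (K - {i}) (Y ?t) = plane d n ((K - {j}) \<inter> (K - {i})) u"
            using plane_inter[of u] u uY' by blast
          have conn: "connected_set d n (S \<inter> plane d n ((K - {j}) \<inter> (K - {i})) u)"
            using CM1[OF Ks(5) c2(2) uidx] .
          have P1: "proper d n (S \<inter> plane d n ((K - {j}) \<inter> (K - {i})) u) (col (Y ?t))"
            using proper_mono[OF colp[OF Y[OF t]]] eq by blast
          have P2: "proper d n (S \<inter> plane d n ((K - {j}) \<inter> (K - {i})) u) \<tau>"
            using proper_mono[OF \<tau>] eq by blast
          have E1: "(col (Y ?t) u \<noteq> \<tau> u) = (col (Y ?t) q \<noteq> \<tau> q)"
            using proper_unique[OF conn P1 P2] u q qY' uY' eq by blast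
          have P3: "proper d n (S \<inter> plane d n ((K - {l}) \<inter> (K - {j})) q0) \<rho>"
            using proper_mono[OF \<rho>] eqVW by blast
          have P4: "proper d n (S \<inter> plane d n ((K - {l}) \<inter> (K - {j})) q0) \<tau>"
            using proper_mono[OF \<tau>] eqVW by blast
          have E2: "(\<rho> q \<noteq> \<tau> q) = (\<rho> q0 \<noteq> \<tau> q0)"
            using proper_unique[OF connVW P3 P4] q q0 eqVW by blast
          have E3: "\<sigma> q = \<rho> q" using sV q(1) .
          have Su: "\<sigma> u = (col (Y ?t) u \<noteq> (col (Y ?t) (r ?t) \<noteq> \<rho> (r ?t)))" by (simp add: \<sigma>_def)
          have Sq: "\<sigma> q = (col (Y ?t) q \<noteq> (col (Y ?t) (r ?t) \<noteq> \<rho> (r ?t)))" using q(3) by (simp add: \<sigma>_def)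
          show ?thesis using E1 E2 E3 Su Sq by argo
        qed
        have "\<tau> a \<noteq> \<tau> b" using \<tau> aW bW adj unfolding proper_def by blast
        then show ?thesis using key[OF aW] key[OF bW] by argo
      qed
    qed
  qed
qed

definition G :: "nat \<Rightarrow> bool" where
  "G m \<longleftrightarrow> (\<forall>K y. K \<subseteq> {..<d} \<and> card K = m \<and> y \<in> idx d n \<longrightarrow>
     connected_set d n (S \<inter> plane d n K y) \<and> (\<exists>s. proper d n (S \<inter> plane d n K y) s))"

lemma G_step: assumes "G (m - 1)" "G m" "m \<ge> 3" shows "G (Suc m)"
  unfolding G_def
proof (intro allI impI conjI)
  fix K y assume H: "K \<subseteq> {..<d} \<and> card K = Suc m \<and> y \<in> idx d n"
  show "connected_set d n (S \<inter> plane d n K y)"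
    using conn_step[of m K y] assms H unfolding G_def by blast
  show "\<exists>s. proper d n (S \<inter> plane d n K y) s"
    using bip_step[of m K y] assms H unfolding G_def by blast
qed

lemma G_all: assumes "G k" "G (k+1)" "k \<ge> 2" shows "k + 1 \<le> m \<Longrightarrow> G (m - 1) \<and> G m"
proof (induction m)
  case 0 then show ?case by simp
next
  case (Suc m)
  show ?case
  proof (cases "Suc m = k + 1")
    case True then show ?thesis using assms by simp
  next
    case False
    then have "k + 1 \<le> m" using Suc.prems by simp
    then have "G (m - 1) \<and> G m" using Suc.IH by blast
    moreover have "m \<ge> 3" using \<open>k + 1 \<le> m\<close> assms by simp
    ultimately show ?thesis using G_step by simp
  qed
qed

end

theorem mainTheorem4:
  fixes d n k :: nat and A :: "nat list \<Rightarrow> real"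
  assumes "double_permutation d n A"
    and "2 \<le> k" and "k \<le> d - 1"
    and "\<forall>K x. K \<subseteq> {..<d} \<and> (card K = k \<or> card K = k + 1) \<and> x \<in> idx d n \<longrightarrow>
           connected_bitrade_in d n K (plane d n K x) (support d n A \<inter> plane d n K x)"
  shows "connected_bitrade_in d n {..<d} (idx d n) (support d n A)"
proof -
  interpret dp d n A using assms(1) by unfold_locales
  have Gk: "G k" "G (k+1)" using assms(4) unfolding G_def connected_bitrade_in_def bitrade_in_def proper_def
    by blast+
  have "G d" using G_all[OF Gk assms(2), of d] assms(2,3) by simp
  show ?thesis
  proof (cases "idx d n = {}")
    case True
    then have "support d n A = {}" unfolding support_def by auto
    then show ?thesis using True unfolding connected_bitrade_in_def bitrade_in_def unitrade_in_def connected_set_def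
      by auto
  next
    case False
    then obtain x where x: "x \<in> idx d n" by blast
    have P: "plane d n {..<d} x = idx d n" unfolding plane_def by auto
    have "connected_set d n (S \<inter> plane d n {..<d} x) \<and> (\<exists>s. proper d n (S \<inter> plane d n {..<d} x) s)"
      using \<open>G d\<close> x unfolding G_def by auto
    moreover have "unitrade_in d n {..<d} (plane d n {..<d} x) (S \<inter> plane d n {..<d} x)"
      by (rule unitrade) simp
    moreover have "S \<inter> idx d n = S" unfolding support_def by auto
    ultimately show ?thesis unfolding P connected_bitrade_in_def bitrade_in_def proper_def by auto
  qed
qed

end
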